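(* Let $\hat P=\mathrm{Spec}(B)\not\simeq S\times\mathbb{G}_a$ be an affine extension of the trivial bundle $S_*\times\mathbb{G}_a$ to which the vertical $\mathbb{G}_m$-action extends. Then $B=\mathcal O(S)\oplus\bigoplus_{\nu\ge1}\mathfrak m_\nu t^\nu\subset\mathcal O(S)[t]$ for a decreasing sequence $(\mathfrak m_\nu)_{\nu\ge1}$ of $\mathfrak m_{\mathbf x}$-primary ideals of $\mathcal O(S)$. Consequently (Corollary) $\hat P$ is of the second kind.
   Context: All varieties are over $\mathbb{C}$. $S$ is a normal affine surface, $\mathbf{x}\in S$ a closed regular point with maximal ideal $\mathfrak m_{\mathbf x}\subset\mathcal O(S)$, $S_*=S\setminus\{\mathbf{x}\}$. An affine extension of a principal $\mathbb{G}_a$-bundle $\pi\colon P\to S_*$ is a normal affine $\mathbb{G}_a$-variety $\hat P=\mathrm{Spec}(B)$ with a morphism $\hat\pi\colon\hat P\to S$ and a $\mathbb{G}_a$-equivariant dominant open embedding $\iota\colon P\hookrightarrow\hat P$ with $\iota(P)=\hat\pi^{-1}(S_* )$ and $\hat\pi\circ\iota=\pi$; $B\subset\mathcal O(P)$ via $\iota^*$. For $P=S_*\times\mathbb{G}_a$ (translation action), $\mathcal O(P)=\mathcal O(S)[t]$; the vertical $\mathbb{G}_m$-action is $\lambda\cdot(s,t)=(s,\lambda t)$. The extension is of the second kind if the morphism $j\colon S\times\mathbb G_a\to\hat P$ with $j^*=\iota^*$ maps $\{\mathbf x\}\times\mathbb G_a$ to a point. *)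

theory Defs
  imports Complex_Main "HOL-Computational_Algebra.Polynomial"
begin

text \<open>Commutative algebra over a base field embedded via a ring homomorphism
  k :: complex => 'b.  The coordinate ring O(S) is the whole type 'a, and
  O(S)[t] is 'a poly.\<close>

definition is_ring_hom_C :: "(complex \<Rightarrow> 'b::comm_ring_1) \<Rightarrow> bool" where
  "is_ring_hom_C k \<longleftrightarrow> k 1 = 1 \<and> (\<forall>x y. k (x + y) = k x + k y) \<and> (\<forall>x y. k (x * y) = k x * k y)"

inductive_set subalg_gen :: "(complex \<Rightarrow> 'b::comm_ring_1) \<Rightarrow> 'b set \<Rightarrow> 'b set"
  for k :: "complex \<Rightarrow> 'b" and G :: "'b set" where
  gen: "g \<in> G \<Longrightarrow> g \<in> subalg_gen k G"
| const: "k z \<in> subalg_gen k G"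
| add: "x \<in> subalg_gen k G \<Longrightarrow> y \<in> subalg_gen k G \<Longrightarrow> x + y \<in> subalg_gen k G"
| mult: "x \<in> subalg_gen k G \<Longrightarrow> y \<in> subalg_gen k G \<Longrightarrow> x * y \<in> subalg_gen k G"

definition fg_algebra :: "(complex \<Rightarrow> 'b::comm_ring_1) \<Rightarrow> 'b set \<Rightarrow> bool" where
  "fg_algebra k R \<longleftrightarrow> (\<exists>G. finite G \<and> G \<subseteq> R \<and> subalg_gen k G = R)"

text \<open>A subring R of a domain is integrally closed in its field of fractions:
  if a/b (a, b in R, b nonzero) satisfies a monic equation over R, then b divides a in R.\<close>
definition integrally_closed :: "'b::idom set \<Rightarrow> bool" where
  "integrally_closed R \<longleftrightarrow>
     (\<forall>a\<in>R. \<forall>b\<in>R. b \<noteq> 0 \<longrightarrow>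
        (\<exists>n>0. \<exists>cs. (\<forall>i. cs i \<in> R) \<and> a ^ n + (\<Sum>i=1..n. cs i * a ^ (n - i) * b ^ i) = 0)
        \<longrightarrow> (\<exists>q\<in>R. a = q * b))"

definition is_ideal :: "'a::comm_ring_1 set \<Rightarrow> bool" where
  "is_ideal I \<longleftrightarrow> 0 \<in> I \<and> (\<forall>x\<in>I. \<forall>y\<in>I. x + y \<in> I) \<and> (\<forall>r. \<forall>x\<in>I. r * x \<in> I)"

definition prime_ideal :: "'a::comm_ring_1 set \<Rightarrow> bool" where
  "prime_ideal P \<longleftrightarrow> is_ideal P \<and> P \<noteq> UNIV \<and> (\<forall>x y. x * y \<in> P \<longrightarrow> x \<in> P \<or> y \<in> P)"

definition maximal_ideal :: "'a::comm_ring_1 set \<Rightarrow> bool" where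
  "maximal_ideal m \<longleftrightarrow> is_ideal m \<and> m \<noteq> UNIV \<and>
     (\<forall>I. is_ideal I \<longrightarrow> m \<subseteq> I \<longrightarrow> I = m \<or> I = UNIV)"

text \<open>A chain of prime ideals P0 < P1 < ... < Pn (a list of n+1 primes has length n).\<close>
definition prime_chain :: "'a::comm_ring_1 set list \<Rightarrow> bool" where
  "prime_chain ps \<longleftrightarrow> ps \<noteq> [] \<and> (\<forall>P\<in>set ps. prime_ideal P) \<and> sorted_wrt (\<subset>) ps"

definition krull_dim_is :: "'a::comm_ring_1 itself \<Rightarrow> nat \<Rightarrow> bool" where
  "krull_dim_is (T::'a itself) n \<longleftrightarrow>
     (\<exists>ps::'a set list. prime_chain ps \<and> length ps = n + 1) \<and>
     (\<forall>ps::'a set list. prime_chain ps \<longrightarrow> length ps \<le> n + 1)"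

definition height_is :: "'a::comm_ring_1 set \<Rightarrow> nat \<Rightarrow> bool" where
  "height_is P n \<longleftrightarrow>
     (\<exists>ps. prime_chain ps \<and> last ps = P \<and> length ps = n + 1) \<and>
     (\<forall>ps. prime_chain ps \<longrightarrow> last ps = P \<longrightarrow> length ps \<le> n + 1)"

definition ideal_sq :: "'a::comm_ring_1 set \<Rightarrow> 'a set" where
  "ideal_sq m = {(\<Sum>i<(n::nat). a i * b i) | n a b. \<forall>i<n. a i \<in> m \<and> b i \<in> m}"

text \<open>The closed point with maximal ideal m is regular: the local ring at m is regular,
  i.e. dim_{A/m} (m/m^2) equals dim A_m = height m.\<close>
definition regular_point :: "'a::comm_ring_1 set \<Rightarrow> bool" where
  "regular_point m \<longleftrightarrow> (\<exists>n us. height_is m n \<and> length us = n \<and> set us \<subseteq> m \<and>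
     (\<forall>y\<in>m. \<exists>as. length as = n \<and> y - (\<Sum>i<n. as ! i * us ! i) \<in> ideal_sq m) \<and>
     (\<forall>as. length as = n \<longrightarrow> (\<Sum>i<n. as ! i * us ! i) \<in> ideal_sq m \<longrightarrow> set as \<subseteq> m))"

definition radical :: "'a::comm_ring_1 set \<Rightarrow> 'a set" where
  "radical I = {x. \<exists>n. x ^ n \<in> I}"

definition primary_to :: "'a::comm_ring_1 set \<Rightarrow> 'a set \<Rightarrow> bool" where
  "primary_to m Q \<longleftrightarrow> is_ideal Q \<and> Q \<noteq> UNIV \<and>
     (\<forall>x y. x * y \<in> Q \<longrightarrow> x \<notin> Q \<longrightarrow> (\<exists>n. y ^ n \<in> Q)) \<and> radical Q = m"

definition affine_extension_trivial :: "(complex \<Rightarrow> 'a::idom) \<Rightarrow> 'a set \<Rightarrow> 'a poly set \<Rightarrow> bool" where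
  "affine_extension_trivial c m B \<longleftrightarrow>
     fg_algebra (\<lambda>z. [:c z:]) B \<and>
     integrally_closed B \<and>
     (\<forall>a. [:a:] \<in> B) \<and>
     (\<forall>p\<in>B. \<forall>z. pcompose p [:c z, 1:] \<in> B) \<and>
     (\<forall>f\<in>m. \<forall>p. \<exists>n. smult (f ^ n) p \<in> B)"

text \<open>The vertical G_m-action lambda.(s,t) = (s, lambda t) extends to Spec B.\<close>
definition vertical_Gm_extends :: "(complex \<Rightarrow> 'a::idom) \<Rightarrow> 'a poly set \<Rightarrow> bool" where
  "vertical_Gm_extends c B \<longleftrightarrow> (\<forall>p\<in>B. \<forall>z. z \<noteq> 0 \<longrightarrow> pcompose p [:0, c z:] \<in> B)"

text \<open>Second kind: j maps {x} x G_a to a point, i.e. the composite B -> O(S)[t] -> (O(S)/m)[t]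
  lands in the constants.\<close>
definition second_kind :: "'a::idom set \<Rightarrow> 'a poly set \<Rightarrow> bool" where
  "second_kind m B \<longleftrightarrow> (\<forall>p\<in>B. \<forall>n\<ge>1. coeff p n \<in> m)"

end

theory Submission
  imports Defs
begin

lemma hom_basic:
  assumes hom: "is_ring_hom_C c"
  shows "c 0 = 0" "\<And>x. c (- x) = - c x" "\<And>n. c (of_nat n) = of_nat n"
    "\<And>k. c (of_int k) = of_int k" "\<And>x y. c (x * y) = c x * c y" "c 1 = 1"
proof -
  have add: "\<And>x y. c (x + y) = c x + c y" and mul: "\<And>x y. c (x * y) = c x * c y"
    and one: "c 1 = 1" using hom unfolding is_ring_hom_C_def by auto
  show c0: "c 0 = 0" using add[of 0 0] by simp
  show neg: "\<And>x. c (- x) = - c x"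
  proof -
    fix x have "c x + c (- x) = 0" using add[of x "-x"] c0 by simp
    then show "c (- x) = - c x" by (simp add: eq_neg_iff_add_eq_0 add.commute)
  qed
  show nat: "\<And>n. c (of_nat n) = of_nat n"
  proof -
    fix n show "c (of_nat n) = of_nat n"
      by (induction n) (simp_all add: c0 add one)
  qed
  show "\<And>k. c (of_int k) = of_int k"
  proof -
    fix k :: int show "c (of_int k) = of_int k"
    proof -
      have "k = of_nat (nat k) \<or> k = - of_nat (nat (-k))" by arith
      then show ?thesis
      proof
        assume "k = of_nat (nat k)"
        then show ?thesis using nat[of "nat k"] by (metis of_int_of_nat_eq)
      next
        assume h: "k = - of_nat (nat (-k))"
        have "c (of_int k) = c (- of_nat (nat (-k)))" by (subst h) simp
        also have "\<dots> = of_int k" by (subst h) (simp add: neg nat)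
        finally show ?thesis .
      qed
    qed
  qed
  show "\<And>x y. c (x * y) = c x * c y" by (rule mul)
  show "c 1 = 1" by (rule one)
qed

lemma pcompose_monom_gen: "pcompose (monom a n) q = smult a (q ^ n)"
  by (induction n) (simp_all add: monom_0 monom_Suc pcompose_pCons)

lemma sum_closed:
  assumes "finite A" "0 \<in> B" "\<And>x y. x \<in> B \<Longrightarrow> y \<in> B \<Longrightarrow> x + y \<in> B"
    "\<And>i. i \<in> A \<Longrightarrow> f i \<in> B"
  shows "sum f A \<in> B"
  using assms(1,4) by (induction A rule: finite_induct) (auto intro: assms(2,3))

lemma ideal_neg: "is_ideal Q \<Longrightarrow> x \<in> Q \<Longrightarrow> - x \<in> Q"
  unfolding is_ideal_def by (metis mult_minus1)

lemma ideal_diff: "is_ideal Q \<Longrightarrow> x \<in> Q \<Longrightarrow> y \<in> Q \<Longrightarrow> x - y \<in> Q"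
  using ideal_neg[of Q y] unfolding is_ideal_def by (metis diff_conv_add_uminus)

lemma ideal_pow_one:
  assumes "is_ideal Q" "1 - u \<in> Q"
  shows "1 - u ^ n \<in> Q"
proof -
  have "1 - u ^ n = (\<Sum>i<n. u^i) * (1 - u)" by (simp add: one_diff_power_eq mult.commute)
  then show ?thesis using assms unfolding is_ideal_def by metis
qed

lemma unit_mod:
  fixes Q m :: "'a::comm_ring_1 set"
  assumes Q: "is_ideal Q" and mx: "maximal_ideal m" and sub: "m \<subseteq> radical Q" and y: "y \<notin> m"
  shows "\<exists>w. 1 - y * w \<in> Q"
proof -
  define I where "I = {r * y + s | r s. s \<in> m}"
  have mi: "is_ideal m" using mx unfolding maximal_ideal_def by auto
  have "is_ideal I"
    unfolding is_ideal_def I_def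
  proof (intro conjI ballI allI)
    show "0 \<in> {r * y + s |r s. s \<in> m}" using mi unfolding is_ideal_def
      by (intro CollectI exI[of _ 0] exI[of _ 0]) simp
  next
    fix a b assume "a \<in> {r * y + s |r s. s \<in> m}" "b \<in> {r * y + s |r s. s \<in> m}"
    then obtain r1 s1 r2 s2 where "a = r1 * y + s1" "s1 \<in> m" "b = r2 * y + s2" "s2 \<in> m" by auto
    moreover have "a + b = (r1 + r2) * y + (s1 + s2)" using \<open>a = r1 * y + s1\<close> \<open>b = r2 * y + s2\<close> by (simp add: algebra_simps)
    moreover have "s1 + s2 \<in> m" using mi \<open>s1 \<in> m\<close> \<open>s2 \<in> m\<close> unfolding is_ideal_def by blast
    ultimately show "a + b \<in> {r * y + s |r s. s \<in> m}" by blast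
  next
    fix t a assume "a \<in> {r * y + s |r s. s \<in> m}"
    then obtain r1 s1 where "a = r1 * y + s1" "s1 \<in> m" by auto
    moreover have "t * a = (t * r1) * y + t * s1" using \<open>a = r1 * y + s1\<close> by (simp add: algebra_simps)
    moreover have "t * s1 \<in> m" using mi \<open>s1 \<in> m\<close> unfolding is_ideal_def by blast
    ultimately show "t * a \<in> {r * y + s |r s. s \<in> m}" by blast
  qed
  moreover have "m \<subseteq> I" unfolding I_def by (force intro: exI[of _ 0])
  moreover have "y \<in> I" unfolding I_def using mi unfolding is_ideal_def by (force intro: exI[of _ 1])
  ultimately have "I = UNIV" using mx y unfolding maximal_ideal_def by blast
  then have "1 \<in> I" by simp
  then obtain r s where rs: "1 = r * y + s" "s \<in> m" unfolding I_def by auto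
  then obtain k where sk: "s ^ k \<in> Q" using sub unfolding radical_def by auto
  have "1 - s ^ k = (1 - s) * (\<Sum>i<k. s^i)" by (rule one_diff_power_eq)
  also have "1 - s = r * y" using rs by (simp add: algebra_simps)
  finally have "1 - y * (r * (\<Sum>i<k. s^i)) = s ^ k" by (simp add: algebra_simps)
  then show ?thesis using sk by metis
qed

lemma primary_from:
  fixes Q m :: "'a::comm_ring_1 set"
  assumes Q: "is_ideal Q" and QU: "Q \<noteq> UNIV" and mx: "maximal_ideal m" and sub: "m \<subseteq> radical Q"
  shows "primary_to m Q"
proof -
  have one: "1 \<notin> Q"
  proof
    assume "1 \<in> Q"
    then have "\<And>x. x \<in> Q" using Q unfolding is_ideal_def by (metis mult.right_neutral)
    then show False using QU by auto
  qed
  have rad: "radical Q \<subseteq> m"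
  proof
    fix x assume "x \<in> radical Q"
    then obtain n where xn: "x ^ n \<in> Q" unfolding radical_def by auto
    show "x \<in> m"
    proof (rule ccontr)
      assume "x \<notin> m"
      then obtain w where w: "1 - x * w \<in> Q" using unit_mod[OF Q mx sub] by blast
      have "1 - (x * w) ^ n \<in> Q" by (rule ideal_pow_one[OF Q w])
      moreover have "(x * w) ^ n \<in> Q" using xn Q unfolding is_ideal_def
        by (metis power_mult_distrib mult.commute)
      ultimately have "1 \<in> Q" using Q unfolding is_ideal_def by (metis diff_add_cancel)
      then show False using one by simp
    qed
  qed
  have prim: "\<And>x y. x * y \<in> Q \<Longrightarrow> x \<notin> Q \<Longrightarrow> (\<exists>n. y ^ n \<in> Q)"
  proof -
    fix x y assume xy: "x * y \<in> Q" and x: "x \<notin> Q"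
    show "\<exists>n. y ^ n \<in> Q"
    proof (cases "y \<in> m")
      case True then show ?thesis using sub unfolding radical_def by auto
    next
      case False
      then obtain w where w: "1 - y * w \<in> Q" using unit_mod[OF Q mx sub] by blast
      have "x = x * (1 - y * w) + w * (x * y)" by (simp add: algebra_simps)
      moreover have "x * (1 - y * w) \<in> Q" using w Q unfolding is_ideal_def by (metis mult.commute)
      moreover have "w * (x * y) \<in> Q" using xy Q unfolding is_ideal_def by metis
      ultimately have "x \<in> Q" using Q unfolding is_ideal_def by metis
      then show ?thesis using x by simp
    qed
  qed
  show ?thesis unfolding primary_to_def using Q QU prim rad sub by blast
qed

theorem mainTheorem4:
  fixes c :: "complex \<Rightarrow> 'a::idom" and m :: "'a set" and B :: "'a poly set"
  assumes hom: "is_ring_hom_C c"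
    and fgA: "fg_algebra c UNIV"
    and normalA: "integrally_closed (UNIV :: 'a set)"
    and dimA: "krull_dim_is TYPE('a) 2"
    and maxm: "maximal_ideal m"
    and reg: "regular_point m"
    and ext: "affine_extension_trivial c m B"
    and nontriv: "B \<noteq> UNIV"
    and Gm: "vertical_Gm_extends c B"
  shows "(\<exists>M :: nat \<Rightarrow> 'a set.
            (\<forall>\<nu>\<ge>1. primary_to m (M \<nu>)) \<and>
            (\<forall>\<nu>\<ge>1. M (Suc \<nu>) \<subseteq> M \<nu>) \<and>
            B = {p. \<forall>\<nu>\<ge>1. coeff p \<nu> \<in> M \<nu>})
         \<and> second_kind m B"
proof -
  note hb = hom_basic[OF hom]
  obtain G where sub: "subalg_gen (\<lambda>z. [:c z:]) G = B"
    using ext unfolding affine_extension_trivial_def fg_algebra_def by blast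
  have addB: "\<And>x y. x \<in> B \<Longrightarrow> y \<in> B \<Longrightarrow> x + y \<in> B" using subalg_gen.add sub by metis
  have mulB: "\<And>x y. x \<in> B \<Longrightarrow> y \<in> B \<Longrightarrow> x * y \<in> B" using subalg_gen.mult sub by metis
  have constB: "\<And>a. [:a:] \<in> B" using ext unfolding affine_extension_trivial_def by blast
  have transB: "\<And>p z. p \<in> B \<Longrightarrow> pcompose p [:c z, 1:] \<in> B"
    using ext unfolding affine_extension_trivial_def by blast
  have locB: "\<And>f p. f \<in> m \<Longrightarrow> \<exists>n. smult (f ^ n) p \<in> B"
    using ext unfolding affine_extension_trivial_def by blast
  have GmB: "\<And>p z. p \<in> B \<Longrightarrow> z \<noteq> 0 \<Longrightarrow> pcompose p [:0, c z:] \<in> B"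
    using Gm unfolding vertical_Gm_extends_def by blast
  have zeroB: "0 \<in> B" using constB[of 0] by simp
  have smultB: "\<And>a p. p \<in> B \<Longrightarrow> smult a p \<in> B" using mulB[OF constB] by simp
  have diffB: "\<And>x y. x \<in> B \<Longrightarrow> y \<in> B \<Longrightarrow> x - y \<in> B"
    using addB smultB[of _ "-1"] by (metis diff_conv_add_uminus smult_minus_left smult_1_left)
  have c2: "c 2 = 2" using hb(3)[of 2] by simp
  have dil2: "\<And>p. p \<in> B \<Longrightarrow> pcompose p [:0, 2:] \<in> B" using GmB[of _ 2] c2 by fastforce
  have iter: "\<And>J p. finite J \<Longrightarrow> p \<in> B \<Longrightarrow>
      \<exists>q\<in>B. \<forall>n. coeff q n = (\<Prod>j\<in>J. (2 ^ n - 2 ^ j)) * coeff p n"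
  proof -
    fix J :: "nat set" and p assume "finite J" "p \<in> B"
    then show "\<exists>q\<in>B. \<forall>n. coeff q n = (\<Prod>j\<in>J. (2 ^ n - 2 ^ j)) * coeff p n"
    proof (induction J rule: finite_induct)
      case empty then show ?case by auto
    next
      case (insert j J)
      then obtain q where q: "q \<in> B" "\<forall>n. coeff q n = (\<Prod>j\<in>J. (2 ^ n - 2 ^ j)) * coeff p n" by blast
      define q' where "q' = pcompose q [:0, 2:] - smult (2 ^ j) q"
      have "q' \<in> B" unfolding q'_def using q(1) dil2 smultB diffB by blast
      moreover have "\<forall>n. coeff q' n = (\<Prod>j\<in>insert j J. (2 ^ n - 2 ^ j)) * coeff p n"
        using q(2) insert(1,2) unfolding q'_def by (simp add: coeff_pcompose_linear algebra_simps)
      ultimately show ?case by blast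
    qed
  qed
  have comp: "\<And>p i. p \<in> B \<Longrightarrow> monom (coeff p i) i \<in> B"
  proof -
    fix p i assume pB: "p \<in> B"
    define J where "J = {0..degree p} - {i}"
    have fJ: "finite J" unfolding J_def by simp
    obtain q where q: "q \<in> B" "\<forall>n. coeff q n = (\<Prod>j\<in>J. (2 ^ n - 2 ^ j)) * coeff p n"
      using iter[OF fJ pB] by blast
    define K :: int where "K = (\<Prod>j\<in>J. (2 ^ i - 2 ^ j))"
    have K0: "K \<noteq> 0" unfolding K_def using fJ
      by (subst prod_zero_iff) (auto simp: J_def)
    have qi: "coeff q i = of_int K * coeff p i" using q(2) unfolding K_def by simp
    have qn: "\<And>n. n \<noteq> i \<Longrightarrow> coeff q n = 0"
    proof -
      fix n assume "n \<noteq> i"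
      show "coeff q n = 0"
      proof (cases "n \<le> degree p")
        case True
        then have "n \<in> J" using \<open>n \<noteq> i\<close> unfolding J_def by auto
        then have "(\<Prod>j\<in>J. (2 ^ n - 2 ^ j) :: 'a) = 0" using fJ by (intro prod_zero) auto
        then show ?thesis using q(2) by simp
      next
        case False then show ?thesis using q(2) by (simp add: coeff_eq_0)
      qed
    qed
    have inv: "c (1 / of_int K) * of_int K = 1"
      using hb(4)[of K] hb(5)[of "1 / of_int K" "of_int K"] hb(6) K0 by simp
    have "smult (c (1 / of_int K)) q = monom (coeff p i) i"
    proof (rule poly_eqI)
      fix n show "coeff (smult (c (1 / of_int K)) q) n = coeff (monom (coeff p i) i) n"
        using qi qn inv by (cases "n = i") (simp_all add: mult.assoc[symmetric])
    qed
    then show "monom (coeff p i) i \<in> B" using smultB[OF q(1)] by metis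
  qed
  define M where "M = (\<lambda>\<nu>. {a. monom a \<nu> \<in> B})"
  have sum_B: "\<And>p. (\<forall>\<nu>\<ge>1. coeff p \<nu> \<in> M \<nu>) \<Longrightarrow> p \<in> B"
  proof -
    fix p assume h: "\<forall>\<nu>\<ge>1. coeff p \<nu> \<in> M \<nu>"
    have "(\<Sum>i\<le>degree p. monom (coeff p i) i) \<in> B"
    proof (rule sum_closed[OF _ zeroB addB])
      fix i show "monom (coeff p i) i \<in> B"
        using h constB[of "coeff p 0"] unfolding M_def
        by (cases "i = 0") (auto simp: monom_0)
    qed simp_all
    then show "p \<in> B" by (simp add: poly_as_sum_of_monoms)
  qed
  have Beq: "B = {p. \<forall>\<nu>\<ge>1. coeff p \<nu> \<in> M \<nu>}"
    using comp sum_B unfolding M_def by blast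
  have dec: "\<And>\<nu>. M (Suc \<nu>) \<subseteq> M \<nu>"
  proof
    fix \<nu> a assume "a \<in> M (Suc \<nu>)"
    then have "monom a (Suc \<nu>) \<in> B" unfolding M_def by simp
    then have "pcompose (monom a (Suc \<nu>)) [:c 1, 1:] \<in> B" by (rule transB)
    then have sB: "smult a ([:1, 1:] ^ Suc \<nu>) \<in> B" by (simp add: pcompose_monom_gen hb(6))
    have cf: "coeff ([:1, 1:] ^ Suc \<nu>) \<nu> = (of_nat (Suc \<nu>) :: 'a)"
      using coeff_linear_poly_power[of \<nu> "Suc \<nu>" "1::'a" 1] by (simp add: binomial_Suc_n del: power_Suc)
    from comp[OF sB, of \<nu>]
    have "monom (a * of_nat (Suc \<nu>)) \<nu> \<in> B"
      by (simp only: coeff_smult cf)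
    then have "smult (c (1 / of_nat (Suc \<nu>))) (monom (a * of_nat (Suc \<nu>)) \<nu>) \<in> B" by (rule smultB)
    moreover have "c (1 / of_nat (Suc \<nu>)) * of_nat (Suc \<nu>) = (1 :: 'a)"
      using hb(3)[of "Suc \<nu>"] hb(5)[of "1 / of_nat (Suc \<nu>)" "of_nat (Suc \<nu>)"] hb(6)
      by (metis divide_self_if mult.commute of_nat_eq_0_iff nat.distinct(1) times_divide_eq_right mult_1_right)
    ultimately show "a \<in> M \<nu>" unfolding M_def by (simp add: smult_monom mult.assoc mult.commute)
  qed
  have decall: "\<And>\<nu>. \<nu> \<ge> 1 \<Longrightarrow> M \<nu> \<subseteq> M 1"
  proof -
    fix \<nu> :: nat assume "\<nu> \<ge> 1"
    then show "M \<nu> \<subseteq> M 1"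
    proof (induction \<nu> rule: dec_induct)
      case base then show ?case by simp
    next
      case (step n) then show ?case using dec[of n] by blast
    qed
  qed
  have idealM: "\<And>\<nu>. is_ideal (M \<nu>)"
    unfolding is_ideal_def M_def
  proof (intro conjI ballI allI)
    fix \<nu> show "0 \<in> {a. monom a \<nu> \<in> B}" using zeroB by simp
  next
    fix \<nu> x y assume "x \<in> {a. monom a \<nu> \<in> B}" "y \<in> {a. monom a \<nu> \<in> B}"
    then show "x + y \<in> {a. monom a \<nu> \<in> B}" using addB by (simp add: add_monom[symmetric])
  next
    fix \<nu> r x assume "x \<in> {a. monom a \<nu> \<in> B}"
    then show "r * x \<in> {a. monom a \<nu> \<in> B}" using smultB by (simp add: smult_monom[symmetric])
  qed
  have M1: "M 1 \<noteq> UNIV"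
  proof
    assume "M 1 = UNIV"
    then have t: "monom 1 1 \<in> B" unfolding M_def by auto
    have tp: "\<And>k. monom 1 1 ^ k \<in> B"
    proof -
      fix k show "monom 1 1 ^ k \<in> B"
      proof (induction k)
        case 0 then show ?case using constB[of 1] by (simp add: one_pCons)
      next
        case (Suc k) then show ?case using mulB[OF t] by simp
      qed
    qed
    have "\<And>\<nu> a. a \<in> M \<nu>" unfolding M_def using smultB[OF tp] by (simp add: monom_power smult_monom)
    then have "\<And>p. p \<in> B" using sum_B by blast
    then show False using nontriv by blast
  qed
  have MU: "\<And>\<nu>. \<nu> \<ge> 1 \<Longrightarrow> M \<nu> \<noteq> UNIV" using decall M1 by blast
  have mrad: "\<And>\<nu>. m \<subseteq> radical (M \<nu>)"
  proof
    fix \<nu> f assume "f \<in> m"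
    then obtain n where "smult (f ^ n) (monom 1 \<nu>) \<in> B" using locB by blast
    then show "f \<in> radical (M \<nu>)" unfolding radical_def M_def by (auto simp: smult_monom)
  qed
  have prim: "\<And>\<nu>. \<nu> \<ge> 1 \<Longrightarrow> primary_to m (M \<nu>)"
    using primary_from[OF idealM MU maxm mrad] by blast
  have sk: "second_kind m B"
    unfolding second_kind_def
  proof (intro ballI allI impI)
    fix p n assume "p \<in> B" "(n::nat) \<ge> 1"
    then have "coeff p n \<in> M n" using Beq by blast
    moreover have "M n \<subseteq> radical (M n)" unfolding radical_def by (force intro: exI[of _ 1])
    moreover have "radical (M n) = m" using prim[OF \<open>n \<ge> 1\<close>] unfolding primary_to_def by blast
    ultimately show "coeff p n \<in> m" by blast
  qed
  show ?thesis using prim dec Beq sk by blast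
qed

end
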